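(* Every commutative ring $A$ which is a principal ideal domain is a BL-ring.
   Context: For a commutative unitary ring $A$, its ideals $Id(A)$ form a residuated lattice $(Id(A),\cap,+,\otimes,\rightarrow,\{0\},A)$, ordered by inclusion, where $I+J$ is the ideal sum, $I\otimes J$ the ideal product, and $I\rightarrow J=(J:I)=\{x\in A: xI\subseteq J\}$. A BL-algebra is a residuated lattice satisfying prelinearity $(x\rightarrow y)\vee(y\rightarrow x)=1$ and divisibility $x\odot(x\rightarrow y)=x\wedge y$. A BL-ring is a commutative unitary ring whose lattice of ideals, with the structure above, is a BL-algebra. *)

theory Defs
  imports "HOL-Algebra.Ideal_Product" "HOL-Algebra.Ring_Divisibility"
begin

definition residuated_lattice ::
  "'a set \<Rightarrow> ('a \<Rightarrow> 'a \<Rightarrow> bool) \<Rightarrow> ('a \<Rightarrow> 'a \<Rightarrow> 'a) \<Rightarrow> ('a \<Rightarrow> 'a \<Rightarrow> 'a) \<Rightarrow>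
   ('a \<Rightarrow> 'a \<Rightarrow> 'a) \<Rightarrow> ('a \<Rightarrow> 'a \<Rightarrow> 'a) \<Rightarrow> 'a \<Rightarrow> 'a \<Rightarrow> bool" where
  "residuated_lattice L leq mt jn pr rs bt tp \<longleftrightarrow>
     bt \<in> L \<and> tp \<in> L \<and>
     (\<forall>x\<in>L. \<forall>y\<in>L. mt x y \<in> L \<and> jn x y \<in> L \<and> pr x y \<in> L \<and> rs x y \<in> L) \<and>
     (\<forall>x\<in>L. leq x x) \<and>
     (\<forall>x\<in>L. \<forall>y\<in>L. leq x y \<and> leq y x \<longrightarrow> x = y) \<and>
     (\<forall>x\<in>L. \<forall>y\<in>L. \<forall>z\<in>L. leq x y \<and> leq y z \<longrightarrow> leq x z) \<and>
     (\<forall>x\<in>L. \<forall>y\<in>L. leq (mt x y) x \<and> leq (mt x y) y \<and>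
        (\<forall>z\<in>L. leq z x \<and> leq z y \<longrightarrow> leq z (mt x y))) \<and>
     (\<forall>x\<in>L. \<forall>y\<in>L. leq x (jn x y) \<and> leq y (jn x y) \<and>
        (\<forall>z\<in>L. leq x z \<and> leq y z \<longrightarrow> leq (jn x y) z)) \<and>
     (\<forall>x\<in>L. leq bt x \<and> leq x tp) \<and>
     (\<forall>x\<in>L. \<forall>y\<in>L. \<forall>z\<in>L. pr (pr x y) z = pr x (pr y z)) \<and>
     (\<forall>x\<in>L. \<forall>y\<in>L. pr x y = pr y x) \<and>
     (\<forall>x\<in>L. pr tp x = x) \<and>
     (\<forall>x\<in>L. \<forall>y\<in>L. \<forall>z\<in>L. leq (pr x y) z \<longleftrightarrow> leq x (rs y z))"

definition BL_algebra ::
  "'a set \<Rightarrow> ('a \<Rightarrow> 'a \<Rightarrow> bool) \<Rightarrow> ('a \<Rightarrow> 'a \<Rightarrow> 'a) \<Rightarrow> ('a \<Rightarrow> 'a \<Rightarrow> 'a) \<Rightarrow>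
   ('a \<Rightarrow> 'a \<Rightarrow> 'a) \<Rightarrow> ('a \<Rightarrow> 'a \<Rightarrow> 'a) \<Rightarrow> 'a \<Rightarrow> 'a \<Rightarrow> bool" where
  "BL_algebra L leq mt jn pr rs bt tp \<longleftrightarrow>
     residuated_lattice L leq mt jn pr rs bt tp \<and>
     (\<forall>x\<in>L. \<forall>y\<in>L. jn (rs x y) (rs y x) = tp) \<and>
     (\<forall>x\<in>L. \<forall>y\<in>L. pr x (rs x y) = mt x y)"

text \<open>Ideal quotient (J : I) = {x. x I \<subseteq> J}.\<close>
definition ideal_residual :: "('a, 'b) ring_scheme \<Rightarrow> 'a set \<Rightarrow> 'a set \<Rightarrow> 'a set" where
  "ideal_residual R I J = {x \<in> carrier R. \<forall>i\<in>I. x \<otimes>\<^bsub>R\<^esub> i \<in> J}"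

definition BL_ring :: "('a, 'b) ring_scheme \<Rightarrow> bool" where
  "BL_ring R \<longleftrightarrow> cring R \<and>
     BL_algebra {I. ideal I R} (\<subseteq>) (\<inter>) (set_add R) (ideal_prod R)
       (\<lambda>I J. ideal_residual R I J) {\<zero>\<^bsub>R\<^esub>} (carrier R)"

end

theory Submission
  imports Defs
begin

context cring
begin

lemma res_ideal:
  assumes "ideal I R" "ideal J R"
  shows "ideal (ideal_residual R I J) R"
proof (rule idealI)
  show "ring R" by (rule ring_axioms)
  have Ic: "\<And>i. i \<in> I \<Longrightarrow> i \<in> carrier R" by (rule ideal.Icarr[OF assms(1)])
  show "subgroup (ideal_residual R I J) (add_monoid R)"
  proof (rule add.subgroupI)
    show "ideal_residual R I J \<subseteq> carrier R"
      unfolding ideal_residual_def by auto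
    show "ideal_residual R I J \<noteq> {}"
    proof -
      have "\<zero> \<in> ideal_residual R I J"
        unfolding ideal_residual_def using Ic assms(2)
        by (auto simp: additive_subgroup.zero_closed ideal.axioms(1))
      thus ?thesis by blast
    qed
    fix x y assume x: "x \<in> ideal_residual R I J" and y: "y \<in> ideal_residual R I J"
    show "\<ominus> x \<in> ideal_residual R I J"
    proof -
      have xc: "x \<in> carrier R" using x unfolding ideal_residual_def by auto
      have "\<And>i. i \<in> I \<Longrightarrow> (\<ominus> x) \<otimes> i \<in> J"
      proof -
        fix i assume i: "i \<in> I"
        have "(\<ominus> x) \<otimes> i = \<ominus> (x \<otimes> i)" using xc Ic[OF i] by (simp add: l_minus)
        moreover have "x \<otimes> i \<in> J" using x i unfolding ideal_residual_def by auto
        ultimately show "(\<ominus> x) \<otimes> i \<in> J"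
          using assms(2) by (simp add: additive_subgroup.a_inv_closed ideal.axioms(1))
      qed
      thus ?thesis unfolding ideal_residual_def using xc by auto
    qed
    show "x \<oplus> y \<in> ideal_residual R I J"
    proof -
      have xc: "x \<in> carrier R" and yc: "y \<in> carrier R" using x y unfolding ideal_residual_def by auto
      have "\<And>i. i \<in> I \<Longrightarrow> (x \<oplus> y) \<otimes> i \<in> J"
      proof -
        fix i assume i: "i \<in> I"
        have "(x \<oplus> y) \<otimes> i = x \<otimes> i \<oplus> y \<otimes> i" using xc yc Ic[OF i] by (simp add: l_distr)
        moreover have "x \<otimes> i \<in> J" "y \<otimes> i \<in> J" using x y i unfolding ideal_residual_def by auto
        ultimately show "(x \<oplus> y) \<otimes> i \<in> J"
          using assms(2) by (simp add: additive_subgroup.a_closed ideal.axioms(1))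
      qed
      thus ?thesis unfolding ideal_residual_def using xc yc by auto
    qed
  qed
  fix a x assume a: "a \<in> ideal_residual R I J" and x: "x \<in> carrier R"
  have ac: "a \<in> carrier R" using a unfolding ideal_residual_def by auto
  have l: "x \<otimes> a \<in> ideal_residual R I J"
  proof -
    have "\<And>i. i \<in> I \<Longrightarrow> (x \<otimes> a) \<otimes> i \<in> J"
    proof -
      fix i assume i: "i \<in> I"
      have "(x \<otimes> a) \<otimes> i = x \<otimes> (a \<otimes> i)" using ac x Ic[OF i] by (simp add: m_assoc)
      moreover have "a \<otimes> i \<in> J" using a i unfolding ideal_residual_def by auto
      ultimately show "(x \<otimes> a) \<otimes> i \<in> J" using assms(2) x by (simp add: ideal.I_l_closed)
    qed
    thus ?thesis unfolding ideal_residual_def using ac x by auto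
  qed
  show "x \<otimes> a \<in> ideal_residual R I J" by (rule l)
  show "a \<otimes> x \<in> ideal_residual R I J" using l ac x by (simp add: m_comm)
qed

lemma residuation:
  assumes "ideal I R" "ideal J R" "ideal K R"
  shows "ideal_prod R I J \<subseteq> K \<longleftrightarrow> I \<subseteq> ideal_residual R J K"
proof
  assume h: "ideal_prod R I J \<subseteq> K"
  show "I \<subseteq> ideal_residual R J K"
  proof
    fix i assume i: "i \<in> I"
    have "\<forall>j\<in>J. i \<otimes> j \<in> K"
    proof
      fix j assume "j \<in> J"
      hence "i \<otimes> j \<in> ideal_prod R I J" using i by (simp add: ideal_prod.prod)
      thus "i \<otimes> j \<in> K" using h by blast
    qed
    moreover have "i \<in> carrier R" using ideal.Icarr[OF assms(1) i] .
    ultimately show "i \<in> ideal_residual R J K" unfolding ideal_residual_def by simp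
  qed
next
  assume h: "I \<subseteq> ideal_residual R J K"
  show "ideal_prod R I J \<subseteq> K"
  proof
    fix s assume "s \<in> ideal_prod R I J"
    thus "s \<in> K"
    proof (induct s rule: ideal_prod.induct)
      case (prod i j) thus ?case using h unfolding ideal_residual_def by auto
    next
      case (sum s1 s2) thus ?case using assms(3) by (simp add: additive_subgroup.a_closed ideal.axioms(1))
    qed
  qed
qed

lemma sum_upper:
  assumes "ideal I R" "ideal J R"
  shows "I \<subseteq> set_add R I J" "J \<subseteq> set_add R I J"
proof -
  have z: "\<zero> \<in> I" "\<zero> \<in> J" using assms by (simp_all add: additive_subgroup.zero_closed ideal.axioms(1))
  show "I \<subseteq> set_add R I J"
  proof
    fix i assume i: "i \<in> I"
    have "i = i \<oplus> \<zero>" using i assms(1) ideal.Icarr by fastforce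
    thus "i \<in> set_add R I J" unfolding set_add_def' using i z by blast
  qed
  show "J \<subseteq> set_add R I J"
  proof
    fix i assume i: "i \<in> J"
    have "i = \<zero> \<oplus> i" using i assms(2) ideal.Icarr by fastforce
    thus "i \<in> set_add R I J" unfolding set_add_def' using i z by blast
  qed
qed

lemma sum_least:
  assumes "ideal I R" "ideal J R" "ideal K R" "I \<subseteq> K" "J \<subseteq> K"
  shows "set_add R I J \<subseteq> K"
  using assms unfolding set_add_def'
  by (auto intro!: additive_subgroup.a_closed[OF ideal.axioms(1)[OF assms(3)]])

lemma divisibility:
  assumes "ideal I R" "ideal J R" "a \<in> carrier R" "I = PIdl a"
  shows "ideal_prod R I (ideal_residual R I J) = I \<inter> J"
proof
  have "ideal (ideal_residual R I J) R" using res_ideal assms by blast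
  hence "ideal_prod R I (ideal_residual R I J) \<subseteq> I \<inter> (ideal_residual R I J)"
    using ideal_prod_inter assms(1) by blast
  moreover have "ideal_prod R I (ideal_residual R I J) \<subseteq> J"
  proof -
    have "ideal_prod R I (ideal_residual R I J) = ideal_prod R (ideal_residual R I J) I"
      using ideal_prod_commute assms(1) \<open>ideal (ideal_residual R I J) R\<close> by blast
    moreover have "ideal_prod R (ideal_residual R I J) I \<subseteq> J"
      using residuation[OF \<open>ideal (ideal_residual R I J) R\<close> assms(1) assms(2)] by blast
    ultimately show ?thesis by simp
  qed
  ultimately show "ideal_prod R I (ideal_residual R I J) \<subseteq> I \<inter> J" by blast
next
  show "I \<inter> J \<subseteq> ideal_prod R I (ideal_residual R I J)"
  proof
    fix x assume x: "x \<in> I \<inter> J"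
    then obtain r where r: "r \<in> carrier R" "x = r \<otimes> a" using assms(4) unfolding cgenideal_def by auto
    have "r \<in> ideal_residual R I J"
      unfolding ideal_residual_def
    proof (intro CollectI conjI ballI)
      show "r \<in> carrier R" by (rule r(1))
      fix i assume "i \<in> I"
      then obtain s where s: "s \<in> carrier R" "i = s \<otimes> a" using assms(4) unfolding cgenideal_def by auto
      have "r \<otimes> i = s \<otimes> x" using s r assms(3) by (simp add: m_lcomm)
      thus "r \<otimes> i \<in> J" using x s assms(2) by (simp add: ideal.I_l_closed)
    qed
    moreover have "a \<in> I" using assms(3,4) cgenideal_self by blast
    moreover have "x = a \<otimes> r" using r assms(3) by (simp add: m_comm)
    ultimately show "x \<in> ideal_prod R I (ideal_residual R I J)" using ideal_prod.prod by metis
  qed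
qed

end

context principal_domain
begin

lemma res_zero:
  assumes "ideal J R"
  shows "ideal_residual R {\<zero>} J = carrier R"
  unfolding ideal_residual_def using assms
  by (auto simp: additive_subgroup.zero_closed ideal.axioms(1))

lemma prelin:
  assumes "ideal I R" "ideal J R"
  shows "set_add R (ideal_residual R I J) (ideal_residual R J I) = carrier R"
proof -
  have i1: "ideal (ideal_residual R I J) R" "ideal (ideal_residual R J I) R"
    using res_ideal assms by auto
  have S: "ideal (set_add R (ideal_residual R I J) (ideal_residual R J I)) R" using add_ideals i1 by blast
  obtain a where a: "a \<in> carrier R" "I = PIdl a" using exists_gen assms(1) by blast
  obtain b where b: "b \<in> carrier R" "J = PIdl b" using exists_gen assms(2) by blast
  show ?thesis
  proof (cases "a = \<zero> \<or> b = \<zero>")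
    case True
    moreover have "PIdl \<zero> = {\<zero>}" unfolding cgenideal_def by (auto intro!: exI[where x="\<zero>"])
    ultimately have "I = {\<zero>} \<or> J = {\<zero>}" using a b by auto
    moreover have sub: "set_add R (ideal_residual R I J) (ideal_residual R J I) \<subseteq> carrier R"
      by (rule subsetI, rule ideal.Icarr[OF S])
    ultimately show ?thesis
    proof (elim disjE)
      assume "I = {\<zero>}"
      hence "ideal_residual R I J = carrier R" using res_zero assms(2) by simp
      thus ?thesis using sum_upper(1)[OF i1] sub by simp
    next
      assume "J = {\<zero>}"
      hence "ideal_residual R J I = carrier R" using res_zero assms(1) by simp
      thus ?thesis using sum_upper(2)[OF i1] sub by simp
    qed
  next
    case False
    obtain d where d: "d \<in> carrier R" "PIdl d = set_add R I J"
      using exists_gen add_ideals assms by metis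
    have "a \<in> PIdl d" using sum_upper[OF assms] a cgenideal_self d by blast
    then obtain a' where a': "a' \<in> carrier R" "a = a' \<otimes> d" unfolding cgenideal_def by auto
    have "b \<in> PIdl d" using sum_upper[OF assms] b cgenideal_self d by blast
    then obtain b' where b': "b' \<in> carrier R" "b = b' \<otimes> d" unfolding cgenideal_def by auto
    have "d \<in> set_add R I J" using d cgenideal_self by blast
    then obtain x y where xy: "x \<in> carrier R" "y \<in> carrier R" "d = x \<otimes> a \<oplus> y \<otimes> b"
      unfolding set_add_def' a b cgenideal_def by auto
    have "d \<noteq> \<zero>" using False a' by auto
    have "\<one> \<otimes> d = (x \<otimes> a' \<oplus> y \<otimes> b') \<otimes> d"
      using xy a' b' d by (simp add: l_distr m_assoc)
    moreover have Xc: "x \<otimes> a' \<oplus> y \<otimes> b' \<in> carrier R" using xy a' b' by simp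
    ultimately have one: "\<one> = x \<otimes> a' \<oplus> y \<otimes> b'"
      using m_rcancel[OF \<open>d \<noteq> \<zero>\<close> d(1) one_closed Xc] by blast
    have "b' \<in> ideal_residual R I J"
      unfolding ideal_residual_def
    proof (intro CollectI conjI ballI)
      show "b' \<in> carrier R" by (rule b'(1))
      fix i assume "i \<in> I"
      then obtain s where s: "s \<in> carrier R" "i = s \<otimes> a" using a unfolding cgenideal_def by auto
      have "b' \<otimes> i = (s \<otimes> a') \<otimes> b" using s a' b' d by algebra
      thus "b' \<otimes> i \<in> J" unfolding b cgenideal_def using s a' by blast
    qed
    hence y1: "y \<otimes> b' \<in> ideal_residual R I J" using i1 xy by (simp add: ideal.I_l_closed)
    have "a' \<in> ideal_residual R J I"
      unfolding ideal_residual_def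
    proof (intro CollectI conjI ballI)
      show "a' \<in> carrier R" by (rule a'(1))
      fix i assume "i \<in> J"
      then obtain s where s: "s \<in> carrier R" "i = s \<otimes> b" using b unfolding cgenideal_def by auto
      have "a' \<otimes> i = (s \<otimes> b') \<otimes> a" using s a' b' d by algebra
      thus "a' \<otimes> i \<in> I" unfolding a cgenideal_def using s b' by blast
    qed
    hence x1: "x \<otimes> a' \<in> ideal_residual R J I" using i1 xy by (simp add: ideal.I_l_closed)
    have "\<one> = y \<otimes> b' \<oplus> x \<otimes> a'" using one xy a' b' by (simp add: a_comm)
    hence "\<one> \<in> set_add R (ideal_residual R I J) (ideal_residual R J I)"
      unfolding set_add_def' using x1 y1 by blast
    thus ?thesis using S ideal.one_imp_carrier by blast
  qed
qed

end

lemma (in principal_domain) BL: "BL_ring R"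
  unfolding BL_ring_def BL_algebra_def residuated_lattice_def
  apply (intro conjI ballI allI impI)
  apply (simp_all only: mem_Collect_eq)
  subgoal by (rule is_cring)
  subgoal by (rule zeroideal)
  subgoal by (rule oneideal)
  subgoal by (rule i_intersect)
  subgoal by (rule add_ideals)
  subgoal by (rule ideal_prod_is_ideal)
  subgoal by (rule res_ideal)
  subgoal by blast
  subgoal by blast
  subgoal by blast
  subgoal by blast
  subgoal by blast
  subgoal by (rule sum_upper)
  subgoal by (rule sum_upper)
  subgoal by (rule sum_least) auto
  subgoal by (simp add: additive_subgroup.zero_closed ideal.axioms(1))
  subgoal by (meson ideal.Icarr subsetI)
  subgoal by (rule ideal_prod_assoc)
  subgoal by (rule ideal_prod_commute)
  subgoal by (metis ideal_prod_commute ideal_prod_one oneideal)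
  subgoal by (rule residuation)
  subgoal by (rule prelin)
  subgoal for x y using exists_gen divisibility by metis
  done

theorem theorem3p7:
  fixes A :: "('a, 'b) ring_scheme"
  assumes "principal_domain A"
  shows "BL_ring A"
  using principal_domain.BL[OF assms] .

end
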